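(* Let $q\ge 2$ and $n\ge 2$ be integers and let $m=n-1$. Under uniform transmission over the $1$-deletion channel with input length $n$, $$\min_{{\boldsymbol y}\in\Sigma_q^{m}} \mathsf{H}^{\mathsf{In}}_{1\text{-}\mathsf{Del}}({\boldsymbol y}) = \log_2(nq)-\frac{\log_2 n}{q},$$ and this minimum is attained only by channel outputs having a single run (constant sequences).
   Context: $\Sigma_q=\{0,1,\dots,q-1\}$. For sequences ${\boldsymbol x}$ of length $N$ and ${\boldsymbol y}$ of length $\ell\le N$, the embedding number $\omega_{{\boldsymbol y}}({\boldsymbol x})$ is the number of index tuples $1\le i_1<\dots<i_\ell\le N$ with $x_{i_j}=y_j$ for all $j$. The $k$-deletion channel with input length $n$ maps ${\boldsymbol x}\in\Sigma_q^n$ to ${\boldsymbol y}\in\Sigma_q^{n-k}$ with probability $\Pr\{{\boldsymbol y}\mid{\boldsymbol x}\}=\omega_{{\boldsymbol y}}({\boldsymbol x})/\binom{n}{k}$. Under uniform transmission, the input $X$ is uniform on $\Sigma_q^n$, and for an output ${\boldsymbol y}$ the input entropy is $\mathsf{H}^{\mathsf{In}}_{k\text{-}\mathsf{Del}}({\boldsymbol y})=H(X\mid Y={\boldsymbol y})=-\sum_{{\boldsymbol x}}P({\boldsymbol x}\mid{\boldsymbol y})\log_2 P({\boldsymbol x}\mid{\boldsymbol y})$ where $P({\boldsymbol x}\mid {\boldsymbol y})=\Pr\{{\boldsymbol y}\mid{\boldsymbol x}\}/\sum_{{\boldsymbol x}'\in\Sigma_q^n}\Pr\{{\boldsymbol y}\mid{\boldsymbol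 x}'\}$. A run of a sequence is a maximal block of identical consecutive symbols. *)

theory Defs
  imports Complex_Main
begin

definition seqs :: "nat \<Rightarrow> nat \<Rightarrow> nat list set" where
  "seqs q n = {x. length x = n \<and> set x \<subseteq> {0..<q}}"

text \<open>Embedding number: number of increasing index tuples i_1<...<i_l
  (equivalently, index sets of size l) with x_{i_j} = y_j.\<close>
definition emb :: "nat list \<Rightarrow> nat list \<Rightarrow> nat" where
  "emb y x = card {I. I \<subseteq> {0..<length x} \<and> card I = length y \<and> nths x I = y}"

definition del_prob :: "nat \<Rightarrow> nat \<Rightarrow> nat list \<Rightarrow> nat list \<Rightarrow> real" where
  "del_prob n k y x = real (emb y x) / real (n choose k)"

text \<open>Posterior P(x | y) under uniform input on Sigma_q^n.\<close>
definition post :: "nat \<Rightarrow> nat \<Rightarrow> nat \<Rightarrow> nat list \<Rightarrow> nat list \<Rightarrow> real" where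
  "post q n k y x = del_prob n k y x / (\<Sum>x'\<in>seqs q n. del_prob n k y x')"

definition input_entropy :: "nat \<Rightarrow> nat \<Rightarrow> nat \<Rightarrow> nat list \<Rightarrow> real" where
  "input_entropy q n k y =
     - (\<Sum>x\<in>seqs q n. (let p = post q n k y x in if p = 0 then 0 else p * log 2 p))"

definition num_runs :: "nat list \<Rightarrow> nat" where
  "num_runs y = length (remdups_adj y)"

end

theory Submission
  imports Defs
begin


lemma ln_lt_minus_one: "(x::real) > 1 \<Longrightarrow> ln x < x - 1"
proof -
  assume x: "x > 1"
  have s: "sqrt x > 1" using x by simp
  have "ln x = 2 * ln (sqrt x)" using x by (simp add: ln_sqrt)
  also have "\<dots> \<le> 2 * (sqrt x - 1)" using ln_le_minus_one[of "sqrt x"] s by simp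
  also have "\<dots> < x - 1"
  proof -
    have "(sqrt x - 1)^2 > 0" using s by simp
    hence "(sqrt x)^2 - 2 * sqrt x + 1 > 0" by (simp add: power2_eq_square algebra_simps)
    thus ?thesis using x by simp
  qed
  finally show ?thesis .
qed

lemma h_mono:
  fixes a b :: real
  assumes "1 < a" "a < b"
  shows "a * ln a / (a - 1) < b * ln b / (b - 1)"
proof (rule DERIV_pos_imp_increasing[OF assms(2)])
  fix x :: real assume x: "a \<le> x" "x \<le> b"
  hence x1: "x > 1" using assms by simp
  have "DERIV (\<lambda>t. t * ln t / (t - 1)) x :> (((1 * ln x + x * (1/x)) * (x - 1) - x * ln x * 1) / (x - 1)^2)"
    using x1 by (auto intro!: derivative_eq_intros simp: power2_eq_square)
  moreover have "((1 * ln x + x * (1/x)) * (x - 1) - x * ln x * 1) / (x - 1)^2 > 0"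
  proof -
    have "((1 * ln x + x * (1/x)) * (x - 1) - x * ln x * 1) = x - 1 - ln x"
      using x1 by (simp add: algebra_simps)
    moreover have "x - 1 - ln x > 0" using ln_lt_minus_one[OF x1] by simp
    ultimately show ?thesis using x1 by simp
  qed
  ultimately show "\<exists>y. DERIV (\<lambda>t. t * ln t / (t - 1)) x :> y \<and> y > 0" by blast
qed

definition gg :: "nat \<Rightarrow> real" where "gg e = (if e = 0 then 0 else real e * log 2 (real e))"

lemma gg_bound:
  assumes n: "n \<ge> 2" and e: "e \<le> n"
  shows "gg e \<le> real n * log 2 (real n) / (real n - 1) * real (e - 1)"
    and "2 \<le> e \<Longrightarrow> e < n \<Longrightarrow> gg e < real n * log 2 (real n) / (real n - 1) * real (e - 1)"
proof -
  have c0: "real n * log 2 (real n) / (real n - 1) \<ge> 0" using n by simp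
  show strict: "gg e < real n * log 2 (real n) / (real n - 1) * real (e - 1)" if "2 \<le> e" "e < n"
  proof -
    have "real e * ln (real e) / (real e - 1) < real n * ln (real n) / (real n - 1)"
      using h_mono[of "real e" "real n"] that by simp
    hence "real e * ln (real e) < real n * ln (real n) / (real n - 1) * (real e - 1)"
      using that by (simp add: field_simps)
    hence "real e * ln (real e) / ln 2 < real n * ln (real n) / (real n - 1) * (real e - 1) / ln 2"
      by (intro divide_strict_right_mono) auto
    thus ?thesis using that by (simp add: gg_def log_def of_nat_diff field_simps)
  qed
  show "gg e \<le> real n * log 2 (real n) / (real n - 1) * real (e - 1)"
  proof (cases "e \<le> 1")
    case True
    then have "gg e = 0" by (cases e) (auto simp: gg_def)
    then show ?thesis using c0 by (metis mult_nonneg_nonneg of_nat_0_le_iff)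
  next
    case False
    show ?thesis
    proof (cases "e = n")
      case True
      then show ?thesis using n by (simp add: gg_def of_nat_diff)
    next
      case False2: False
      then show ?thesis using strict[of] False e by simp
    qed
  qed
qed

lemma sum_bound:
  fixes S :: "'a set" and e :: "'a \<Rightarrow> nat"
  assumes fin: "finite S" and n: "n \<ge> 2" and le: "\<forall>x\<in>S. e x \<le> n"
    and tot: "(\<Sum>x\<in>S. e x - 1) \<le> n - 1"
  shows "(\<Sum>x\<in>S. gg (e x)) \<le> real n * log 2 (real n)"
    and "(\<Sum>x\<in>S. gg (e x)) = real n * log 2 (real n) \<longleftrightarrow> (\<exists>x\<in>S. e x = n)"
proof -
  define c where "c = real n * log 2 (real n) / (real n - 1)"
  have c0: "c \<ge> 0" using n by (simp add: c_def)
  have pt: "\<And>x. x \<in> S \<Longrightarrow> gg (e x) \<le> c * real (e x - 1)"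
    using gg_bound(1)[OF n] le by (simp add: c_def)
  have le1: "(\<Sum>x\<in>S. gg (e x)) \<le> c * real (\<Sum>x\<in>S. e x - 1)"
  proof -
    have "(\<Sum>x\<in>S. gg (e x)) \<le> (\<Sum>x\<in>S. c * real (e x - 1))" by (rule sum_mono) (rule pt)
    also have "\<dots> = c * real (\<Sum>x\<in>S. e x - 1)" by (simp add: sum_distrib_left)
    finally show ?thesis .
  qed
  have le2: "c * real (\<Sum>x\<in>S. e x - 1) \<le> real n * log 2 (real n)"
  proof -
    have "real (\<Sum>x\<in>S. e x - 1) \<le> real (n - 1)" using tot by (simp only: of_nat_le_iff)
    hence "c * real (\<Sum>x\<in>S. e x - 1) \<le> c * real (n - 1)" using c0 by (rule mult_left_mono)
    also have "\<dots> = real n * log 2 (real n)" using n by (simp add: c_def of_nat_diff)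
    finally show ?thesis .
  qed
  show "(\<Sum>x\<in>S. gg (e x)) \<le> real n * log 2 (real n)" using le1 le2 by linarith
  have lpos: "real n * log 2 (real n) > 0" using n by simp
  show "(\<Sum>x\<in>S. gg (e x)) = real n * log 2 (real n) \<longleftrightarrow> (\<exists>x\<in>S. e x = n)"
  proof
    assume ex: "\<exists>x\<in>S. e x = n"
    then obtain x0 where x0: "x0 \<in> S" "e x0 = n" by blast
    have "(\<Sum>x\<in>S. e x - 1) = (e x0 - 1) + (\<Sum>x\<in>S - {x0}. e x - 1)"
      using fin x0 by (simp add: sum.remove)
    hence "(\<Sum>x\<in>S - {x0}. e x - 1) = 0" using tot x0 n by simp
    hence z: "\<forall>x\<in>S - {x0}. e x - 1 = 0" using fin by simp
    have "\<forall>x\<in>S - {x0}. gg (e x) = 0"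
    proof
      fix x assume "x \<in> S - {x0}"
      hence "e x \<le> 1" using z by auto
      thus "gg (e x) = 0" by (cases "e x") (auto simp: gg_def)
    qed
    hence "(\<Sum>x\<in>S - {x0}. gg (e x)) = 0" by simp
    moreover have "(\<Sum>x\<in>S. gg (e x)) = gg (e x0) + (\<Sum>x\<in>S - {x0}. gg (e x))"
      using fin x0 by (simp add: sum.remove)
    ultimately show "(\<Sum>x\<in>S. gg (e x)) = real n * log 2 (real n)" using x0 n by (simp add: gg_def)
  next
    assume eq: "(\<Sum>x\<in>S. gg (e x)) = real n * log 2 (real n)"
    show "\<exists>x\<in>S. e x = n"
    proof (rule ccontr)
      assume no: "\<not> (\<exists>x\<in>S. e x = n)"
      show False
      proof (cases "\<exists>x\<in>S. 2 \<le> e x")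
        case True
        then obtain a where a: "a \<in> S" "2 \<le> e a" by blast
        have "e a < n" using a no le by (metis le_neq_implies_less)
        hence "gg (e a) < c * real (e a - 1)"
          using gg_bound(2)[OF n _ a(2)] le a by (simp add: c_def)
        hence "\<exists>a\<in>S. gg (e a) < c * real (e a - 1)" using a(1) by blast
        hence "(\<Sum>x\<in>S. gg (e x)) < (\<Sum>x\<in>S. c * real (e x - 1))"
          using pt by (intro sum_strict_mono_ex1[OF fin]) blast+
        also have "\<dots> = c * real (\<Sum>x\<in>S. e x - 1)" by (simp add: sum_distrib_left)
        finally show False using le2 eq by linarith
      next
        case False
        hence "\<forall>x\<in>S. gg (e x) = 0"
        proof (intro ballI)
          fix x assume "\<not> (\<exists>x\<in>S. 2 \<le> e x)" "x \<in> S"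
          hence "e x \<le> 1" by auto
          thus "gg (e x) = 0" by (cases "e x") (auto simp: gg_def)
        qed
        hence "(\<Sum>x\<in>S. gg (e x)) = 0" by simp
        thus False using eq lpos by linarith
      qed
    qed
  qed
qed



definition dl :: "nat \<Rightarrow> 'a list \<Rightarrow> 'a list" where "dl i x = take i x @ drop (Suc i) x"
definition ins :: "nat \<Rightarrow> 'a \<Rightarrow> 'a list \<Rightarrow> 'a list" where "ins i c y = take i y @ c # drop i y"
definition DD :: "'a list \<Rightarrow> 'a list \<Rightarrow> nat set" where "DD y x = {i. i < length x \<and> dl i x = y}"

lemma nths_dl: "nths xs ({0..<length xs} - {i}) = dl i xs"
proof (induction xs arbitrary: i)
  case Nil then show ?case by (simp add: dl_def)
next
  case (Cons a xs)
  show ?case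
  proof (cases i)
    case 0
    have "{j. Suc j \<in> {0..<length (a # xs)} - {0}} = {0..<length xs}" by auto
    then show ?thesis using 0 by (simp add: nths_Cons dl_def nths_all)
  next
    case (Suc k)
    have "{j. Suc j \<in> {0..<length (a # xs)} - {Suc k}} = {0..<length xs} - {k}" by auto
    then show ?thesis using Suc Cons.IH[of k] by (simp add: nths_Cons dl_def)
  qed
qed

lemma length_dl: "i < length x \<Longrightarrow> length (dl i x) = length x - 1"
  by (simp add: dl_def)

lemma nth_dl: "i < length x \<Longrightarrow> k < length x - 1 \<Longrightarrow> dl i x ! k = (if k < i then x ! k else x ! Suc k)"
  by (auto simp: dl_def nth_append min_def)

lemma length_ins: "i \<le> length y \<Longrightarrow> length (ins i c y) = Suc (length y)"
  by (simp add: ins_def)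

lemma nth_ins_same: "i \<le> length y \<Longrightarrow> ins i c y ! i = c"
  by (simp add: ins_def nth_append)

lemma dl_ins: "i \<le> length y \<Longrightarrow> dl i (ins i c y) = y"
  by (simp add: ins_def dl_def)

lemma ins_dl: "i < length x \<Longrightarrow> ins i (x ! i) (dl i x) = x"
  by (simp add: ins_def dl_def id_take_nth_drop[symmetric])

lemma set_ins: "set (ins i c y) = insert c (set y)"
proof -
  have "set (ins i c y) = insert c (set (take i y) \<union> set (drop i y))" by (simp add: ins_def)
  also have "set (take i y) \<union> set (drop i y) = set y"
    using set_append[of "take i y" "drop i y"] by simp
  finally show ?thesis .
qed

lemma set_dl: "set (dl i x) \<subseteq> set x"
  by (auto simp: dl_def dest: in_set_takeD in_set_dropD)

lemma dl_eq_adj: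
  assumes "a < i" "i < length x" "dl a x = dl i x"
  shows "x ! (i - 1) = x ! i"
proof -
  have "dl a x ! (i - 1) = x ! i" using assms by (subst nth_dl) auto
  moreover have "dl i x ! (i - 1) = x ! (i - 1)" using assms by (subst nth_dl) auto
  ultimately show ?thesis using assms by simp
qed

lemma emb_eq:
  assumes "length x = n" "length y = n - 1" "n \<ge> 1"
  shows "emb y x = card (DD y x)"
proof -
  have "bij_betw (\<lambda>i. {0..<n} - {i}) (DD y x)
          {I. I \<subseteq> {0..<length x} \<and> card I = length y \<and> nths x I = y}"
  proof (rule bij_betwI')
    fix i j assume i: "i \<in> DD y x" and j: "j \<in> DD y x"
    then have "i < n" "j < n" using assms by (auto simp: DD_def)
    show "({0..<n} - {i} = {0..<n} - {j}) = (i = j)"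
    proof
      assume eq: "{0..<n} - {i} = {0..<n} - {j}"
      have "i \<notin> {0..<n} - {j}" unfolding eq[symmetric] by simp
      then show "i = j" using \<open>i < n\<close> by simp
    qed simp
  next
    fix i assume i: "i \<in> DD y x"
    then have il: "i < n" and d: "dl i x = y" using assms by (auto simp: DD_def)
    have "card ({0..<n} - {i}) = n - 1" using il by simp
    moreover have "nths x ({0..<n} - {i}) = y" using nths_dl[of x i] d assms by simp
    ultimately show "{0..<n} - {i} \<in> {I. I \<subseteq> {0..<length x} \<and> card I = length y \<and> nths x I = y}"
      using assms by auto
  next
    fix I assume I: "I \<in> {I. I \<subseteq> {0..<length x} \<and> card I = length y \<and> nths x I = y}"
    then have Isub: "I \<subseteq> {0..<n}" and Ic: "card I = n - 1" and In: "nths x I = y" using assms by auto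
    have "card ({0..<n} - I) = n - card I" using Isub by (simp add: card_Diff_subset finite_subset)
    then have "card ({0..<n} - I) = 1" using Ic assms by simp
    then obtain i where i: "{0..<n} - I = {i}" by (rule card_1_singletonE)
    have iI: "I = {0..<n} - {i}" using i Isub by blast
    have "i \<in> {0..<n} - I" using i by simp
    then have "i < n" by simp
    then have "i \<in> DD y x" using In iI assms nths_dl[of x i] by (auto simp: DD_def)
    then show "\<exists>i\<in>DD y x. I = {0..<n} - {i}" using iI by blast
  qed
  then show ?thesis unfolding emb_def by (simp add: bij_betw_same_card)
qed

lemma finite_seqs: "finite (seqs q n)"
proof -
  have "seqs q n = {xs. set xs \<subseteq> {0..<q} \<and> length xs = n}" by (auto simp: seqs_def)
  then show ?thesis using finite_lists_length_eq[of "{0..<q}" n] by simp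
qed

lemma sum_card:
  assumes y: "y \<in> seqs q (n - 1)" and n: "n \<ge> 1"
  shows "(\<Sum>x\<in>seqs q n. card (DD y x)) = n * q"
proof -
  have ly: "length y = n - 1" and sy: "set y \<subseteq> {0..<q}" using y by (auto simp: seqs_def)
  have finD: "\<And>x. finite (DD y x)" by (simp add: DD_def)
  have "(\<Sum>x\<in>seqs q n. card (DD y x)) = card (Sigma (seqs q n) (DD y))"
    using finite_seqs finD by (simp add: card_SigmaI)
  also have "\<dots> = card ({0..<n} \<times> {0..<q})"
  proof (rule sym, rule bij_betw_same_card)
    show "bij_betw (\<lambda>(i, c). (ins i c y, i)) ({0..<n} \<times> {0..<q}) (Sigma (seqs q n) (DD y))"
    proof (rule bij_betw_byWitness[where f' = "\<lambda>(x, i). (i, x ! i)"])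
      show "(\<lambda>(i, c). (ins i c y, i)) ` ({0..<n} \<times> {0..<q}) \<subseteq> Sigma (seqs q n) (DD y)"
      proof
        fix p assume "p \<in> (\<lambda>(i, c). (ins i c y, i)) ` ({0..<n} \<times> {0..<q})"
        then obtain i c where ic: "p = (ins i c y, i)" "i < n" "c < q" by auto
        have il: "i \<le> length y" using ic ly n by simp
        have "ins i c y \<in> seqs q n" using ic il ly n sy by (auto simp: seqs_def length_ins set_ins)
        moreover have "i \<in> DD y (ins i c y)" using ic il ly n by (simp add: DD_def length_ins dl_ins)
        ultimately show "p \<in> Sigma (seqs q n) (DD y)" using ic by simp
      qed
      show "(\<lambda>(x, i). (i, x ! i)) ` Sigma (seqs q n) (DD y) \<subseteq> {0..<n} \<times> {0..<q}"
      proof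
        fix p assume "p \<in> (\<lambda>(x, i). (i, x ! i)) ` Sigma (seqs q n) (DD y)"
        then obtain x i where xi: "p = (i, x ! i)" "x \<in> seqs q n" "i \<in> DD y x" by auto
        then have "i < n" "length x = n" "set x \<subseteq> {0..<q}" by (auto simp: seqs_def DD_def)
        then have "x ! i < q" using nth_mem[of i x] by fastforce
        then show "p \<in> {0..<n} \<times> {0..<q}" using xi \<open>i < n\<close> by simp
      qed
      show "\<forall>p\<in>{0..<n} \<times> {0..<q}. (\<lambda>(x, i). (i, x ! i)) ((\<lambda>(i, c). (ins i c y, i)) p) = p"
        using ly n by (auto simp: nth_ins_same)
      show "\<forall>p\<in>Sigma (seqs q n) (DD y). (\<lambda>(i, c). (ins i c y, i)) ((\<lambda>(x, i). (i, x ! i)) p) = p"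
        using ins_dl by (auto simp: DD_def)
    qed
  qed
  also have "\<dots> = n * q" by simp
  finally show ?thesis .
qed

lemma key_ins:
  assumes "i \<in> DD y x" "a \<in> DD y x" "a < i"
  shows "x = ins i (y ! (i - 1)) y"
proof -
  have il: "i < length x" and yi: "dl i x = y" and ya: "dl a x = y" using assms by (auto simp: DD_def)
  have e: "x ! (i - 1) = x ! i" using dl_eq_adj[of a i x] assms il ya yi by simp
  have "y ! (i - 1) = x ! (i - 1)" using yi il assms(3) nth_dl[of i x "i - 1"] by simp
  then have "y ! (i - 1) = x ! i" using e by simp
  then show ?thesis using ins_dl[OF il] yi by simp
qed

lemma sum_minus:
  assumes y: "y \<in> seqs q (n - 1)" and n: "n \<ge> 1"
  shows "(\<Sum>x\<in>seqs q n. card (DD y x) - 1) \<le> n - 1"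
proof -
  define E where "E x = DD y x - {Min (DD y x)}" for x
  have finD: "\<And>x. finite (DD y x)" by (simp add: DD_def)
  have cE: "card (DD y x) - 1 = card (E x)" for x
  proof (cases "DD y x = {}")
    case True then show ?thesis by (simp add: E_def)
  next
    case False then show ?thesis using finD[of x] by (simp add: E_def card_Diff_singleton Min_in)
  qed
  have "(\<Sum>x\<in>seqs q n. card (DD y x) - 1) = (\<Sum>x\<in>seqs q n. card (E x))" using cE by simp
  also have "\<dots> = card (Sigma (seqs q n) E)"
    using finite_seqs finD by (simp add: card_SigmaI E_def)
  also have "\<dots> \<le> card {1..<n}"
  proof (rule card_inj_on_le)
    show "inj_on snd (Sigma (seqs q n) E)"
    proof (rule inj_onI)
      fix p p' assume p: "p \<in> Sigma (seqs q n) E" and p': "p' \<in> Sigma (seqs q n) E" and s: "snd p = snd p'"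
      obtain x i where xi: "p = (x, i)" "i \<in> E x" using p by auto
      obtain x' i' where xi': "p' = (x', i')" "i' \<in> E x'" using p' by auto
      have "x = ins i (y ! (i - 1)) y"
      proof (rule key_ins)
        show "i \<in> DD y x" using xi by (simp add: E_def)
        then have ne: "DD y x \<noteq> {}" by auto
        show "Min (DD y x) \<in> DD y x" using Min_in[OF finD ne] .
        show "Min (DD y x) < i" using xi Min_le[OF finD, of i x] by (auto simp: E_def)
      qed
      moreover have "x' = ins i' (y ! (i' - 1)) y"
      proof (rule key_ins)
        show "i' \<in> DD y x'" using xi' by (simp add: E_def)
        then have ne: "DD y x' \<noteq> {}" by auto
        show "Min (DD y x') \<in> DD y x'" using Min_in[OF finD ne] .
        show "Min (DD y x') < i'" using xi' Min_le[OF finD, of i' x'] by (auto simp: E_def)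
      qed
      ultimately show "p = p'" using xi xi' s by simp
    qed
    show "snd ` Sigma (seqs q n) E \<subseteq> {1..<n}"
    proof
      fix j assume "j \<in> snd ` Sigma (seqs q n) E"
      then obtain x where x: "x \<in> seqs q n" "j \<in> E x" by auto
      have jD: "j \<in> DD y x" using x by (simp add: E_def)
      then have ne: "DD y x \<noteq> {}" by auto
      have "Min (DD y x) < j" using x Min_le[OF finD jD] by (auto simp: E_def)
      moreover have "j < n" using jD x by (simp add: DD_def seqs_def)
      ultimately show "j \<in> {1..<n}" by simp
    qed
  qed simp
  also have "\<dots> = n - 1" by simp
  finally show ?thesis .
qed

lemma dl_replicate: "i < n \<Longrightarrow> dl i (replicate n c) = replicate (n - 1) c"
proof -
  assume i: "i < n"
  have "dl i (replicate n c) = replicate i c @ replicate (n - Suc i) c" using i by (simp add: dl_def min_def)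
  also have "\<dots> = replicate (i + (n - Suc i)) c" by (simp add: replicate_add)
  also have "i + (n - Suc i) = n - 1" using i by simp
  finally show ?thesis .
qed

lemma const_iff:
  assumes y: "y \<in> seqs q (n - 1)" and n: "n \<ge> 2"
  shows "(\<exists>x\<in>seqs q n. card (DD y x) = n) \<longleftrightarrow> num_runs y = 1"
proof
  have ly: "length y = n - 1" and sy: "set y \<subseteq> {0..<q}" using y by (auto simp: seqs_def)
  assume "\<exists>x\<in>seqs q n. card (DD y x) = n"
  then obtain x where x: "x \<in> seqs q n" "card (DD y x) = n" by blast
  have lx: "length x = n" using x by (simp add: seqs_def)
  have "DD y x \<subseteq> {0..<n}" using lx by (auto simp: DD_def)
  then have DA: "DD y x = {0..<n}" using card_subset_eq[OF finite_atLeastLessThan, of "DD y x" 0 n] x(2) by simp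
  have adj: "x ! (i - 1) = x ! i" if "0 < i" "i < n" for i
  proof -
    have "0 \<in> DD y x" "i \<in> DD y x" using DA that by auto
    then show ?thesis using dl_eq_adj[of 0 i x] that lx by (simp add: DD_def)
  qed
  have cx: "i < n \<Longrightarrow> x ! i = x ! 0" for i
  proof (induction i)
    case 0 then show ?case by simp
  next
    case (Suc i) then show ?case using adj[of "Suc i"] by simp
  qed
  have "0 \<in> DD y x" using DA n by simp
  then have y0: "dl 0 x = y" by (simp add: DD_def)
  have "y = replicate (n - 1) (x ! 0)"
  proof (rule nth_equalityI)
    show "length y = length (replicate (n - 1) (x ! 0))" using ly by simp
    fix k assume k: "k < length y"
    have "y ! k = x ! Suc k" using y0[symmetric] k ly lx n nth_dl[of 0 x k] by simp
    then show "y ! k = replicate (n - 1) (x ! 0) ! k" using cx[of "Suc k"] k ly by simp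
  qed
  then show "num_runs y = 1" using n by (simp add: num_runs_def remdups_adj_replicate)
next
  have ly: "length y = n - 1" and sy: "set y \<subseteq> {0..<q}" using y by (auto simp: seqs_def)
  assume "num_runs y = 1"
  then have ne: "y \<noteq> []" and yr: "y = replicate (length y) (hd y)"
    using remdups_adj_singleton_iff[of y] by (auto simp: num_runs_def)
  define c where "c = hd y"
  have "c \<in> set y" using ne by (simp add: c_def)
  then have cq: "c < q" using sy by auto
  have rs: "replicate n c \<in> seqs q n" using cq by (auto simp: seqs_def)
  have yc: "y = replicate (n - 1) c" using yr ly unfolding c_def by metis
  have "DD y (replicate n c) = {0..<n}"
    unfolding DD_def yc by (auto simp: dl_replicate)
  then have "card (DD y (replicate n c)) = n" by simp
  then show "\<exists>x\<in>seqs q n. card (DD y x) = n" using rs by blast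
qed



lemma entropy_formula:
  assumes y: "y \<in> seqs q (n - 1)" and n: "n \<ge> 1" and q: "q \<ge> 1"
  shows "input_entropy q n 1 y = log 2 (real n * real q) - (\<Sum>x\<in>seqs q n. gg (card (DD y x))) / (real n * real q)"
proof -
  define e where "e x = card (DD y x)" for x
  define N where "N = real n * real q"
  have Npos: "N > 0" using n q by (simp add: N_def)
  have ly: "length y = n - 1" using y by (simp add: seqs_def)
  have embe: "emb y x = e x" if "x \<in> seqs q n" for x
    using emb_eq[of x n y] that ly n by (simp add: seqs_def e_def)
  have S: "(\<Sum>x'\<in>seqs q n. del_prob n 1 y x') = real q"
  proof -
    have "(\<Sum>x'\<in>seqs q n. del_prob n 1 y x') = (\<Sum>x'\<in>seqs q n. real (e x') / real n)"
      by (rule sum.cong) (simp_all add: del_prob_def embe)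
    also have "\<dots> = real (\<Sum>x'\<in>seqs q n. e x') / real n" by (simp add: sum_divide_distrib)
    also have "(\<Sum>x'\<in>seqs q n. e x') = n * q" using sum_card[OF y n] by (simp add: e_def)
    finally show ?thesis using n by simp
  qed
  have post: "post q n 1 y x = real (e x) / N" if "x \<in> seqs q n" for x
    unfolding post_def S using that n q by (simp add: del_prob_def embe N_def)
  have tm: "(let p = post q n 1 y x in if p = 0 then 0 else p * log 2 p)
      = (gg (e x) - real (e x) * log 2 N) / N" if "x \<in> seqs q n" for x
  proof (cases "e x = 0")
    case True then show ?thesis using post[OF that] by (simp add: gg_def)
  next
    case False
    then have ep: "real (e x) > 0" by simp
    have "real (e x) / N * log 2 (real (e x) / N) = real (e x) / N * (log 2 (real (e x)) - log 2 N)"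
      using ep Npos by (simp add: log_divide)
    also have "\<dots> = (gg (e x) - real (e x) * log 2 N) / N" using False by (simp add: gg_def field_simps)
    finally show ?thesis using post[OF that] False Npos by (simp add: Let_def)
  qed
  have "input_entropy q n 1 y = - (\<Sum>x\<in>seqs q n. (gg (e x) - real (e x) * log 2 N) / N)"
    unfolding input_entropy_def by (subst sum.cong[OF refl tm]) simp_all
  also have "\<dots> = - ((\<Sum>x\<in>seqs q n. gg (e x)) - real (\<Sum>x\<in>seqs q n. e x) * log 2 N) / N"
    by (simp add: sum_divide_distrib[symmetric] sum_subtractf sum_distrib_right) (simp only: minus_divide_left minus_diff_eq)
  also have "real (\<Sum>x\<in>seqs q n. e x) = N" using sum_card[OF y n] by (simp add: e_def N_def)
  also have "- ((\<Sum>x\<in>seqs q n. gg (e x)) - N * log 2 N) / N = log 2 N - (\<Sum>x\<in>seqs q n. gg (e x)) / N"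
    using Npos by (simp add: field_simps)
  finally show ?thesis by (simp add: N_def e_def)
qed

theorem theorem6:
  fixes q n m :: nat
  assumes "q \<ge> 2" and "n \<ge> 2" and "m = n - 1"
  shows "Min (input_entropy q n 1 ` seqs q m) = log 2 (real n * real q) - log 2 (real n) / real q
    \<and> (\<forall>y\<in>seqs q m. input_entropy q n 1 y = Min (input_entropy q n 1 ` seqs q m)
           \<longleftrightarrow> num_runs y = 1)"
proof -
  define V where "V = log 2 (real n * real q) - log 2 (real n) / real q"
  define G where "G y = (\<Sum>x\<in>seqs q n. gg (card (DD y x)))" for y
  have N: "real n * log 2 (real n) / (real n * real q) = log 2 (real n) / real q"
    using assms by simp
  have H: "input_entropy q n 1 y = log 2 (real n * real q) - G y / (real n * real q)"
    if "y \<in> seqs q m" for y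
    using entropy_formula[of y q n] that assms by (simp add: G_def)
  have props: "G y \<le> real n * log 2 (real n) \<and> (G y = real n * log 2 (real n) \<longleftrightarrow> num_runs y = 1)"
    if y: "y \<in> seqs q m" for y
  proof -
    have y': "y \<in> seqs q (n - 1)" using y assms by simp
    have le: "\<forall>x\<in>seqs q n. card (DD y x) \<le> n"
    proof
      fix x assume "x \<in> seqs q n"
      then have "DD y x \<subseteq> {0..<n}" by (auto simp: DD_def seqs_def)
      then show "card (DD y x) \<le> n" using card_mono[of "{0..<n}" "DD y x"] by simp
    qed
    have sm: "(\<Sum>x\<in>seqs q n. card (DD y x) - 1) \<le> n - 1" using sum_minus[OF y'] assms by simp
    note sb = sum_bound[where e="\<lambda>x. card (DD y x)" and n=n, OF finite_seqs _ le sm]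
    show ?thesis using sb assms const_iff[OF y'] by (simp add: G_def)
  qed
  have geV: "input_entropy q n 1 y \<ge> V" if "y \<in> seqs q m" for y
  proof -
    have "G y / (real n * real q) \<le> real n * log 2 (real n) / (real n * real q)"
      using props[OF that] assms by (intro divide_right_mono) auto
    then show ?thesis using H[OF that] N by (simp add: V_def)
  qed
  have eqV: "input_entropy q n 1 y = V \<longleftrightarrow> num_runs y = 1" if "y \<in> seqs q m" for y
  proof -
    have "input_entropy q n 1 y = V \<longleftrightarrow> G y / (real n * real q) = real n * log 2 (real n) / (real n * real q)"
      using H[OF that] N by (auto simp: V_def)
    also have "\<dots> \<longleftrightarrow> G y = real n * log 2 (real n)" using assms by (subst divide_cancel_right) simp
    finally show ?thesis using props[OF that] by simp
  qed
  have r: "replicate m 0 \<in> seqs q m" using assms by (auto simp: seqs_def)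
  have "num_runs (replicate m 0) = 1" using assms by (simp add: num_runs_def remdups_adj_replicate)
  then have "V \<in> input_entropy q n 1 ` seqs q m" using eqV[OF r] r by force
  then have Min: "Min (input_entropy q n 1 ` seqs q m) = V"
  proof (intro Min_eqI)
    show "finite (input_entropy q n 1 ` seqs q m)" by (simp add: finite_seqs)
    fix z assume "z \<in> input_entropy q n 1 ` seqs q m"
    then show "V \<le> z" using geV by blast
  qed
  show ?thesis using Min eqV by (simp add: V_def)
qed

end
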